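(* Consider the random-feature weak-to-strong setup below, with any activation $\sigma$, any bottom-layer distribution $\mathcal U$, any input distribution $\mathcal D$, any teacher width $M_{TE}$, and any target $f^*$ with $\mathbb E_{x\sim\mathcal D}[f^*(x)^2]=1$. Then for any student stopping time $T\in[0,\infty]$ (and for the student being either of finite width trained by the gradient flow below, or its infinite-width limit), $$\mathcal L_{ST}\ \ge\ \frac{\big(\sqrt{1+3\mathcal L_{TE}}-\sqrt{1-\mathcal L_{TE}}\big)^2}{4}\ \ge\ \frac34\,\mathcal L_{TE}^2 .$$
   Context: Two-layer random-feature networks: $f_{w,u}(x)=\sum_{i=1}^{m}w_i\sigma(\langle u_i,x\rangle)$, $x\in\mathbb R^d$, with bottom weights $u_i\in\mathbb R^d$ drawn i.i.d. from a distribution $\mathcal U$ and then fixed; only $w$ is trained. Population loss $\mathcal L(f)=\mathbb E_{x\sim\mathcal D}[(f(x)-f^*(x))^2]$. Teacher: $M_{TE}$ units, bottom weights $u_{t,i}\sim\mathcal U$, top weights $w_t\in\arg\min_{w\in\mathbb R^{M_{TE}}}\mathbb E_{x\sim\mathcal D}[(f_{w,u_t}(x)-f^*(x))^2]$; $f_{\mathrm{teacher}}=f_{w_t,u_t}$ and $\mathcal L_{TE}=\mathcal L(f_{\mathrm{teacher}})$. Student: $M_{ST}$ units with bottom weights $u_{s,i}\sim\mathcal U$, top weights initialized at $0$ and trained by gradient flow $\frac{d w_{s,i}}{dt}=-\frac{1}{M_{ST}}\frac{\partial}{\partial w_{s,i}}\mathbb E_{x\sim\mathcal D}[(f_{w_s(t),u_s}(x)-f_{\mathrm{teacher}}(x))^2]$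 up to time $T$; $f_{\mathrm{student}}=f_{w_s(T),u_s}$. The infinite-width student is $f_{\mathrm{student}}=\sum_k(1-e^{-\lambda_kT})\langle f_{\mathrm{teacher}},e_k\rangle_{\mathcal D}e_k$, where $\mathcal K(x,x')=\mathbb E_{u\sim\mathcal U}[\sigma(\langle u,x\rangle)\sigma(\langle u,x'\rangle)]=\sum_k\lambda_ke_k(x)e_k(x')$ with $\langle e_i,e_j\rangle_{\mathcal D}=\delta_{ij}$ and $\langle f,g\rangle_{\mathcal D}=\mathbb E_{x\sim\mathcal D}[f(x)g(x)]$. $\mathcal L_{ST}=\mathcal L(f_{\mathrm{student}})$. *)

theory Defs
  imports "HOL-Probability.Probability"
begin

definition rf_net :: "(real \<Rightarrow> real) \<Rightarrow> nat \<Rightarrow> (nat \<Rightarrow> real) \<Rightarrow> (nat \<Rightarrow> 'a::real_inner) \<Rightarrow> 'a \<Rightarrow> real" where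
  "rf_net \<sigma> m w u x = (\<Sum>i<m. w i * \<sigma> (inner (u i) x))"

definition pop_risk :: "'a measure \<Rightarrow> ('a \<Rightarrow> real) \<Rightarrow> ('a \<Rightarrow> real) \<Rightarrow> real" where
  "pop_risk D f g = (\<integral>x. (f x - g x)^2 \<partial>D)"

definition L2ip :: "'a measure \<Rightarrow> ('a \<Rightarrow> real) \<Rightarrow> ('a \<Rightarrow> real) \<Rightarrow> real" where
  "L2ip D f g = (\<integral>x. f x * g x \<partial>D)"

definition sq_integrable :: "'a measure \<Rightarrow> ('a \<Rightarrow> real) \<Rightarrow> bool" where
  "sq_integrable D f \<longleftrightarrow> f \<in> borel_measurable D \<and> integrable D (\<lambda>x. (f x)^2)"

definition rf_kernel :: "'a::real_inner measure \<Rightarrow> (real \<Rightarrow> real) \<Rightarrow> 'a \<Rightarrow> 'a \<Rightarrow> real" where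
  "rf_kernel U \<sigma> x x' = (\<integral>u. \<sigma> (inner u x) * \<sigma> (inner u x') \<partial>U)"

definition is_teacher :: "'a::real_inner measure \<Rightarrow> (real \<Rightarrow> real) \<Rightarrow> nat \<Rightarrow> (nat \<Rightarrow> 'a) \<Rightarrow> ('a \<Rightarrow> real) \<Rightarrow> (nat \<Rightarrow> real) \<Rightarrow> bool" where
  "is_teacher D \<sigma> m u fstar w \<longleftrightarrow>
     (\<forall>w'. pop_risk D (rf_net \<sigma> m w u) fstar \<le> pop_risk D (rf_net \<sigma> m w' u) fstar)"

definition grad_flow_student :: "'a::real_inner measure \<Rightarrow> (real \<Rightarrow> real) \<Rightarrow> nat \<Rightarrow> (nat \<Rightarrow> 'a)
    \<Rightarrow> ('a \<Rightarrow> real) \<Rightarrow> ereal \<Rightarrow> ('a \<Rightarrow> real) \<Rightarrow> bool" where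
  "grad_flow_student D \<sigma> m u ft T s \<longleftrightarrow>
     (\<exists>ws :: real \<Rightarrow> nat \<Rightarrow> real. \<exists>wT :: nat \<Rightarrow> real.
        (\<forall>i<m. ws 0 i = 0) \<and>
        (\<forall>t. 0 \<le> t \<and> ereal t \<le> T \<longrightarrow>
           (\<forall>i<m. ((\<lambda>\<tau>. ws \<tau> i) has_real_derivative
                     (- (1 / real m) * deriv (\<lambda>c. pop_risk D (rf_net \<sigma> m ((ws t)(i := c)) u) ft) (ws t i)))
                   (at t within {\<tau>. 0 \<le> \<tau> \<and> ereal \<tau> \<le> T}))) \<and>
        (T \<noteq> \<infinity> \<longrightarrow> (\<forall>i<m. wT i = ws (real_of_ereal T) i)) \<and>
        (T = \<infinity> \<longrightarrow> (\<forall>i<m. ((\<lambda>t. ws t i) \<longlongrightarrow> wT i) at_top)) \<and>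
        s = rf_net \<sigma> m wT u)"

definition kernel_eigdecomp :: "'a measure \<Rightarrow> ('a \<Rightarrow> 'a \<Rightarrow> real) \<Rightarrow> (nat \<Rightarrow> real) \<Rightarrow> (nat \<Rightarrow> 'a \<Rightarrow> real) \<Rightarrow> nat set \<Rightarrow> bool" where
  "kernel_eigdecomp D K lam e I \<longleftrightarrow>
     (\<forall>k\<in>I. 0 \<le> lam k \<and> sq_integrable D (e k)) \<and>
     (\<forall>j\<in>I. \<forall>k\<in>I. L2ip D (e j) (e k) = (if j = k then 1 else 0)) \<and>
     (AE x in D. AE x' in D. ((\<lambda>k. lam k * e k x * e k x') has_sum K x x') I)"

text \<open>The factor 1 - exp(-lam T), with T = \<infinity> read as the limit t \<rightarrow> \<infinity>.\<close>
definition flow_factor :: "real \<Rightarrow> ereal \<Rightarrow> real" where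
  "flow_factor l T = (if T = \<infinity> then (if 0 < l then 1 else 0) else 1 - exp (- l * real_of_ereal T))"

text \<open>Infinite-width student: sum_k (1 - exp(-lam_k T)) <f_teacher, e_k>_D e_k, the series
  converging (unconditionally) in L2(D).\<close>
definition inf_width_student :: "'a measure \<Rightarrow> (nat \<Rightarrow> real) \<Rightarrow> (nat \<Rightarrow> 'a \<Rightarrow> real) \<Rightarrow> nat set
    \<Rightarrow> ('a \<Rightarrow> real) \<Rightarrow> ereal \<Rightarrow> ('a \<Rightarrow> real) \<Rightarrow> bool" where
  "inf_width_student D lam e I ft T s \<longleftrightarrow>
     sq_integrable D s \<and>
     ((\<lambda>F. pop_risk D s (\<lambda>x. \<Sum>k\<in>F. flow_factor (lam k) T * L2ip D ft (e k) * e k x))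
        \<longlongrightarrow> 0) (finite_subsets_at_top I)"

end

theory Submission
  imports Defs
begin

lemma sqi_mult:
  assumes "sq_integrable D f" "sq_integrable D g"
  shows "integrable D (\<lambda>x. f x * g x)"
proof (rule Bochner_Integration.integrable_bound[where f="\<lambda>x. (f x)^2 + (g x)^2"])
  show "integrable D (\<lambda>x. (f x)^2 + (g x)^2)" using assms unfolding sq_integrable_def by auto
  show "(\<lambda>x. f x * g x) \<in> borel_measurable D" using assms unfolding sq_integrable_def by auto
  show "AE x in D. norm (f x * g x) \<le> norm ((f x)^2 + (g x)^2)"
  proof (intro AE_I2)
    fix x
    have "0 \<le> (\<bar>f x\<bar> - \<bar>g x\<bar>)^2" by simp
    then have "0 \<le> (f x)^2 - 2 * (\<bar>f x\<bar> * \<bar>g x\<bar>) + (g x)^2"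
      by (simp add: power2_diff power2_abs)
    then have "2 * \<bar>f x * g x\<bar> \<le> (f x)^2 + (g x)^2"
      by (simp add: abs_mult)
    then show "norm (f x * g x) \<le> norm ((f x)^2 + (g x)^2)" by simp
  qed
qed

lemma sqi_lin:
  assumes "sq_integrable D f" "sq_integrable D g"
  shows "sq_integrable D (\<lambda>x. a * f x + b * g x)"
proof -
  have i1: "integrable D (\<lambda>x. f x * f x)" "integrable D (\<lambda>x. f x * g x)" "integrable D (\<lambda>x. g x * g x)"
    using sqi_mult assms by blast+
  have eq: "(\<lambda>x. (a * f x + b * g x)^2) = (\<lambda>x. a^2 * (f x * f x) + (2*a*b) * (f x * g x) + b^2 * (g x * g x))"
    by (rule ext) (simp add: power2_eq_square algebra_simps)
  show ?thesis using assms i1 unfolding sq_integrable_def eq by auto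
qed

lemma sqi_zero: "sq_integrable D (\<lambda>x. 0)"
  unfolding sq_integrable_def by auto

lemma sqi_cmult: "sq_integrable D f \<Longrightarrow> sq_integrable D (\<lambda>x. a * f x)"
  using sqi_lin[of D f f a 0] by simp

lemma sqi_sum:
  assumes "finite A" "\<And>i. i \<in> A \<Longrightarrow> sq_integrable D (F i)"
  shows "sq_integrable D (\<lambda>x. \<Sum>i\<in>A. F i x)"
  using assms
proof (induction A rule: finite_induct)
  case empty then show ?case by (simp add: sqi_zero)
next
  case (insert a A)
  then show ?case using sqi_lin[of D "F a" "\<lambda>x. \<Sum>i\<in>A. F i x" 1 1] by simp
qed

lemma ip_comm: "L2ip D f g = L2ip D g f"
  unfolding L2ip_def by (simp add: mult.commute)

lemma ip_nonneg: "0 \<le> L2ip D f f"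
  unfolding L2ip_def by (rule integral_nonneg_AE) auto

lemma ip_lin:
  assumes "sq_integrable D f" "sq_integrable D g" "sq_integrable D h"
  shows "L2ip D (\<lambda>x. a * f x + b * g x) h = a * L2ip D f h + b * L2ip D g h"
proof -
  have i1: "integrable D (\<lambda>x. f x * h x)" "integrable D (\<lambda>x. g x * h x)"
    using sqi_mult assms by blast+
  have eq: "(\<lambda>x. (a * f x + b * g x) * h x) = (\<lambda>x. a * (f x * h x) + b * (g x * h x))"
    by (rule ext) (simp add: algebra_simps)
  show ?thesis unfolding L2ip_def eq using i1 by simp
qed

lemma ip_sum:
  assumes "finite A" "\<And>i. i \<in> A \<Longrightarrow> sq_integrable D (F i)" "sq_integrable D h"
  shows "L2ip D (\<lambda>x. \<Sum>i\<in>A. F i x) h = (\<Sum>i\<in>A. L2ip D (F i) h)"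
proof -
  have eq: "(\<lambda>x. (\<Sum>i\<in>A. F i x) * h x) = (\<lambda>x. \<Sum>i\<in>A. F i x * h x)"
    by (rule ext) (simp add: sum_distrib_right)
  have "(\<integral>x. (\<Sum>i\<in>A. F i x * h x) \<partial>D) = (\<Sum>i\<in>A. (\<integral>x. F i x * h x \<partial>D))"
  proof (rule Bochner_Integration.integral_sum)
    fix i assume "i \<in> A"
    then show "integrable D (\<lambda>x. F i x * h x)" using assms by (intro sqi_mult) auto
  qed
  then show ?thesis unfolding L2ip_def eq .
qed

lemma ip3:
  assumes "sq_integrable D f" "sq_integrable D g" "sq_integrable D h"
  shows "L2ip D (\<lambda>x. a1*f x + a2*g x + a3*h x) (\<lambda>x. b1*f x + b2*g x + b3*h x)
    = a1*b1*L2ip D f f + a2*b2*L2ip D g g + a3*b3*L2ip D h h + (a1*b2+a2*b1)*L2ip D f g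
      + (a1*b3+a3*b1)*L2ip D f h + (a2*b3+a3*b2)*L2ip D g h"
proof -
  have i: "integrable D (\<lambda>x. f x * f x)" "integrable D (\<lambda>x. g x * g x)" "integrable D (\<lambda>x. h x * h x)"
     "integrable D (\<lambda>x. f x * g x)" "integrable D (\<lambda>x. f x * h x)" "integrable D (\<lambda>x. g x * h x)"
    using sqi_mult assms by blast+
  have eq: "(\<lambda>x. (a1*f x + a2*g x + a3*h x) * (b1*f x + b2*g x + b3*h x)) =
    (\<lambda>x. (a1*b1)*(f x*f x) + ((a2*b2)*(g x*g x) + ((a3*b3)*(h x*h x) + ((a1*b2+a2*b1)*(f x*g x)
      + ((a1*b3+a3*b1)*(f x*h x) + (a2*b3+a3*b2)*(g x*h x))))))"
    by (rule ext) (simp add: algebra_simps)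
  show ?thesis unfolding L2ip_def eq using i by (simp add: algebra_simps)
qed

lemma pop_risk_ip: "pop_risk D f g = L2ip D (\<lambda>x. f x - g x) (\<lambda>x. f x - g x)"
  unfolding pop_risk_def L2ip_def by (simp add: power2_eq_square)

lemma disc_real:
  fixes a b c :: real
  assumes "\<And>t. 0 \<le> a - 2*t*b + t^2*c" "0 \<le> c"
  shows "b^2 \<le> a*c"
proof (cases "c = 0")
  case True
  show ?thesis
  proof (rule ccontr)
    assume "\<not> ?thesis"
    then have "b \<noteq> 0" using True by simp
    have "0 \<le> a - 2*((a+1)/(2*b))*b" using assms(1)[of "(a+1)/(2*b)"] True by simp
    then show False using \<open>b \<noteq> 0\<close> by (simp add: field_simps)
  qed
next
  case False
  then have c: "c > 0" using assms(2) by simp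
  have "0 \<le> a - 2*(b/c)*b + (b/c)^2*c" by (rule assms(1))
  then have "0 \<le> a*c - b^2" using c by (simp add: field_simps power2_eq_square)
  then show ?thesis by simp
qed

lemma cauchy_schwarz_ip:
  assumes "sq_integrable D f" "sq_integrable D g"
  shows "(L2ip D f g)^2 \<le> L2ip D f f * L2ip D g g"
proof (rule disc_real)
  fix t
  have "L2ip D (\<lambda>x. f x - t*g x) (\<lambda>x. f x - t*g x)
      = L2ip D f f - 2*t*L2ip D f g + t^2 * L2ip D g g"
    using ip3[OF assms(1,2,2), of 1 "-t" 0 1 "-t" 0] by (simp add: power2_eq_square algebra_simps)
  then show "0 \<le> L2ip D f f - 2*t*L2ip D f g + t^2 * L2ip D g g"
    using ip_nonneg by metis
qed (rule ip_nonneg)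

lemma flow_pos:
  fixes G :: "nat \<Rightarrow> nat \<Rightarrow> real" and b :: "nat \<Rightarrow> real" and w :: "real \<Rightarrow> nat \<Rightarrow> real"
    and S :: "real set" and c :: real
  assumes sym: "\<And>i j. G i j = G j i"
    and w0: "\<And>i. i < m \<Longrightarrow> w 0 i = 0"
    and Sub: "\<And>x. x \<in> S \<Longrightarrow> 0 \<le> x \<and> {0..x} \<subseteq> S"
    and der: "\<And>t i. t \<in> S \<Longrightarrow> i < m \<Longrightarrow>
       ((\<lambda>\<tau>. w \<tau> i) has_real_derivative c * (b i - (\<Sum>j<m. G i j * w t j))) (at t within S)"
    and c: "0 \<le> c"
    and t: "t \<in> S"
  shows "0 \<le> (\<Sum>i<m. w t i * (b i - (\<Sum>j<m. G i j * w t j)))"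
proof -
  define R where "R \<tau> i = b i - (\<Sum>j<m. G i j * w \<tau> j)" for \<tau> i
  have derR: "((\<lambda>\<tau>. R \<tau> i) has_real_derivative - c * (\<Sum>j<m. G i j * R \<tau> j)) (at \<tau> within S)"
    if "\<tau> \<in> S" for \<tau> i
  proof -
    have "((\<lambda>\<tau>. b i - (\<Sum>j<m. G i j * w \<tau> j)) has_real_derivative 0 - (\<Sum>j<m. G i j * (c * R \<tau> j))) (at \<tau> within S)"
      apply (rule DERIV_diff[OF DERIV_const DERIV_sum])
      apply (rule DERIV_cmult)
      using der[OF that] by (simp add: R_def)
    moreover have "(\<lambda>\<tau>. R \<tau> i) = (\<lambda>\<tau>. b i - (\<Sum>j<m. G i j * w \<tau> j))"
      by (simp add: R_def fun_eq_iff)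
    moreover have "0 - (\<Sum>j<m. G i j * (c * R \<tau> j)) = - c * (\<Sum>j<m. G i j * R \<tau> j)"
      by (simp add: sum_distrib_left sum_negf algebra_simps)
    ultimately show ?thesis by simp
  qed
  have pair: "0 \<le> (\<Sum>i<m. R s i * R u i)" if s: "s \<in> S" and u: "u \<in> S" for s u
  proof -
    define lo hi where "lo = min s u" and "hi = max s u"
    have sub: "{lo..hi} \<subseteq> S"
    proof
      fix x assume x: "x \<in> {lo..hi}"
      have hS: "hi \<in> S" using s u by (simp add: hi_def max_def)
      have "0 \<le> lo" using Sub s u by (simp add: lo_def min_def)
      then have "x \<in> {0..hi}" using x by auto
      then show "x \<in> S" using Sub[OF hS] by auto
    qed
    define P where "P \<sigma> = (\<Sum>i<m. R \<sigma> i * R (s+u-\<sigma>) i)" for \<sigma>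
    have dP: "(P has_real_derivative 0) (at \<sigma> within {lo..hi})" if \<sigma>: "\<sigma> \<in> {lo..hi}" for \<sigma>
    proof -
      have refl: "s+u-y \<in> {lo..hi}" if "y \<in> {lo..hi}" for y
        using that by (auto simp: lo_def hi_def min_def max_def split: if_splits)
      have \<sigma>S: "\<sigma> \<in> S" and \<sigma>'S: "s+u-\<sigma> \<in> S" using sub \<sigma> refl[OF \<sigma>] by auto
      have img: "(\<lambda>\<sigma>. s+u-\<sigma>) ` {lo..hi} \<subseteq> S"
        using sub refl by (intro image_subsetI) blast
      have d1: "((\<lambda>\<sigma>. R \<sigma> i) has_real_derivative - c * (\<Sum>j<m. G i j * R \<sigma> j)) (at \<sigma> within {lo..hi})" for i
        using derR[OF \<sigma>S] sub by (rule DERIV_subset)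
      have d2: "((\<lambda>\<sigma>. R (s+u-\<sigma>) i) has_real_derivative (- c * (\<Sum>j<m. G i j * R (s+u-\<sigma>) j)) * (-1))
           (at \<sigma> within {lo..hi})" for i
      proof -
        have h1: "((\<lambda>\<tau>. R \<tau> i) has_real_derivative - c * (\<Sum>j<m. G i j * R (s+u-\<sigma>) j))
            (at (s+u-\<sigma>) within ((\<lambda>\<sigma>. s+u-\<sigma>) ` {lo..hi}))"
          using derR[OF \<sigma>'S] img by (rule DERIV_subset)
        have h2: "((\<lambda>\<sigma>. s+u-\<sigma>) has_real_derivative -1) (at \<sigma> within {lo..hi})"
          by (intro derivative_eq_intros) auto
        from DERIV_image_chain[OF h1 h2] show ?thesis by (simp only: o_def)
      qed
      have "(P has_real_derivative (\<Sum>i<m. (- c * (\<Sum>j<m. G i j * R \<sigma> j)) * R (s+u-\<sigma>) i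
            + ((- c * (\<Sum>j<m. G i j * R (s+u-\<sigma>) j)) * (-1)) * R \<sigma> i)) (at \<sigma> within {lo..hi})"
        unfolding P_def[abs_def] by (intro DERIV_sum DERIV_mult d1 d2)
      moreover
      have sw: "(\<Sum>i<m. \<Sum>j<m. G i j * R (s+u-\<sigma>) j * R \<sigma> i) = (\<Sum>i<m. \<Sum>j<m. G i j * R \<sigma> j * R (s+u-\<sigma>) i)"
        by (subst sum.swap) (simp add: sym mult_ac)
      have "(\<Sum>i<m. (- c * (\<Sum>j<m. G i j * R \<sigma> j)) * R (s+u-\<sigma>) i
            + ((- c * (\<Sum>j<m. G i j * R (s+u-\<sigma>) j)) * (-1)) * R \<sigma> i)
          = c * ((\<Sum>i<m. \<Sum>j<m. G i j * R (s+u-\<sigma>) j * R \<sigma> i) - (\<Sum>i<m. \<Sum>j<m. G i j * R \<sigma> j * R (s+u-\<sigma>) i))"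
        by (simp add: sum_distrib_left sum_distrib_right sum.distrib sum_subtractf sum_negf algebra_simps)
      ultimately show ?thesis using sw by (simp add: DERIV_cong)
    qed
    obtain k where k: "\<forall>x\<in>{lo..hi}. P x = k"
      using has_field_derivative_zero_constant[of "{lo..hi}" P] dP by auto
    have "s \<in> {lo..hi}" "(s+u)/2 \<in> {lo..hi}" by (auto simp: lo_def hi_def)
    then have "P s = P ((s+u)/2)" using k by simp
    moreover have "P ((s+u)/2) = (\<Sum>i<m. (R ((s+u)/2) i)^2)"
      unfolding P_def by (simp add: power2_eq_square field_simps)
    moreover have "P s = (\<Sum>i<m. R s i * R u i)" unfolding P_def by simp
    ultimately show ?thesis by (simp add: sum_nonneg)
  qed
  have t0: "0 \<le> t" and sub: "{0..t} \<subseteq> S" using Sub t by auto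
  define \<psi> where "\<psi> \<tau> = (\<Sum>i<m. w \<tau> i * R t i)" for \<tau>
  have "(\<psi> has_derivative (*) (\<Sum>i<m. c * R x i * R t i)) (at x within {0..t})"
    if "0 \<le> x" "x \<le> t" for x
  proof -
    have xS: "x \<in> S" using sub that by auto
    have "(\<psi> has_real_derivative (\<Sum>i<m. c * R x i * R t i)) (at x within {0..t})"
      unfolding \<psi>_def
      apply (rule DERIV_sum)
      apply (rule DERIV_cmult_right)
      apply (rule DERIV_subset[OF _ sub])
      using der[OF xS] by (simp add: R_def)
    then show ?thesis by (rule has_field_derivative_imp_has_derivative)
  qed
  from mvt_very_simple[OF t0 this] obtain \<xi> where \<xi>: "\<xi> \<in> {0..t}"
    and eq: "\<psi> t - \<psi> 0 = (\<Sum>i<m. c * R \<xi> i * R t i) * (t - 0)" by auto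
  have "\<psi> 0 = 0" unfolding \<psi>_def using w0 by simp
  moreover have "0 \<le> (\<Sum>i<m. c * R \<xi> i * R t i)"
    using pair[of \<xi> t] \<xi> sub t c by (simp add: mult.assoc sum_distrib_left[symmetric] subset_iff)
  ultimately have "0 \<le> \<psi> t" using eq t0 by simp
  then show ?thesis unfolding \<psi>_def R_def .
qed

lemma ip_cmult: "L2ip D (\<lambda>x. c * f x) h = c * L2ip D f h"
  unfolding L2ip_def by (simp add: mult.assoc)

lemma sqi3:
  assumes "sq_integrable D f" "sq_integrable D g" "sq_integrable D h"
  shows "sq_integrable D (\<lambda>x. a1*f x + a2*g x + a3*h x)"
  using sqi_lin[OF sqi_lin[OF assms(1,2), of a1 a2] assms(3), of 1 a3] by simp

lemma real_final:
  fixes p q a h :: real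
  assumes pq: "p \<le> q" and a0: "0 \<le> a" and a1: "a \<le> 1" and xx0: "0 \<le> p + a/4 - q"
    and cs: "(a/4 - q/2 + h - a/2)^2 \<le> (p + a/4 - q) * (a/4 + 1 - a)"
  shows "(sqrt (1 + 3*(1-a)) - sqrt (1-(1-a)))^2/4 \<le> p - 2*h + 1"
proof -
  define xx yy xy where "xx = p + a/4 - q" and "yy = a/4 + 1 - a" and "xy = a/4 - q/2 + h - a/2"
  have yy0: "0 \<le> yy" using a1 by (simp add: yy_def)
  have xx0': "0 \<le> xx" using xx0 by (simp add: xx_def)
  define X Y where "X = sqrt xx" and "Y = sqrt yy"
  have X0: "0 \<le> X" and Y0: "0 \<le> Y" using xx0' yy0 by (auto simp: X_def Y_def)
  have XX: "X^2 = xx" using xx0 by (simp add: X_def xx_def)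
  have YY: "Y^2 = yy" using yy0 by (simp add: Y_def)
  have "xy^2 \<le> (X*Y)^2" using cs XX YY xx0' yy0 by (simp add: xx_def yy_def xy_def power_mult_distrib)
  then have "\<bar>xy\<bar> \<le> X*Y" using power2_le_imp_le[of "\<bar>xy\<bar>" "X*Y"] X0 Y0 by simp
  then have "(Y - X)^2 \<le> xx - 2*xy + yy" using XX YY by (simp add: power2_eq_square algebra_simps) 
  also have "xx - 2*xy + yy = p - 2*h + 1" by (simp add: xx_def yy_def xy_def)
  finally have main: "(Y - X)^2 \<le> p - 2*h + 1" .
  have "xx \<le> a/4" using pq by (simp add: xx_def)
  then have "X \<le> sqrt (a/4)" unfolding X_def by (rule real_sqrt_le_mono)
  then have Xle: "X \<le> sqrt a / 2" by (simp add: real_sqrt_divide)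
  have "a/4 \<le> yy" using a1 by (simp add: yy_def)
  then have "sqrt (a/4) \<le> Y" unfolding Y_def by (rule real_sqrt_le_mono)
  then have "sqrt a / 2 \<le> Y" by (simp add: real_sqrt_divide)
  then have "(Y - sqrt a / 2)^2 \<le> (Y - X)^2" using Xle by (intro power_mono) auto
  moreover have "sqrt (1 + 3*(1-a)) = 2 * Y"
  proof -
    have "1 + 3*(1-a) = 4 * yy" by (simp add: yy_def)
    then show ?thesis by (simp add: Y_def real_sqrt_mult)
  qed
  moreover have "(2*Y - sqrt a)^2/4 = (Y - sqrt a / 2)^2" by (simp add: power2_eq_square field_simps)
  ultimately show ?thesis using main by simp
qed

lemma real_second:
  fixes L :: real
  assumes "0 \<le> L" "L \<le> 1"
  shows "3/4*L^2 \<le> (sqrt (1+3*L) - sqrt (1-L))^2/4"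
proof -
  define A B where "A = sqrt (1+3*L)" and "B = sqrt (1-L)"
  have A0: "0 \<le> A" and B0: "0 \<le> B" using assms by (auto simp: A_def B_def)
  have AA: "A^2 = 1+3*L" and BB: "B^2 = 1-L" using assms by (auto simp: A_def B_def)
  have prod: "(A-B)^2*(A+B)^2 = 16*L^2"
  proof -
    have "(A-B)*(A+B) = 4*L" using AA BB by (simp add: power2_eq_square algebra_simps)
    then have "((A-B)*(A+B))^2 = (4*L)^2" by simp
    then show ?thesis by (simp add: power_mult_distrib)
  qed
  have "3*(A+B)^2 \<le> 16"
  proof -
    have "0 \<le> (A - 3*B)^2" by simp
    then show ?thesis using AA BB by (simp add: power2_eq_square algebra_simps)
  qed
  then have "3*((A-B)^2*(A+B)^2) \<le> 16 * (A-B)^2"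
    by (metis mult.assoc mult.commute mult_right_mono zero_le_power2)
  then have "3*(16*L^2) \<le> 16*(A-B)^2" using prod by simp
  then show ?thesis by (simp add: A_def B_def)
qed

lemma flow_factor_bounds:
  assumes "0 \<le> l" "0 \<le> T"
  shows "0 \<le> flow_factor l T \<and> flow_factor l T \<le> 1"
proof (cases "T = \<infinity>")
  case True then show ?thesis by (simp add: flow_factor_def)
next
  case False
  have "0 \<le> real_of_ereal T" using assms(2) by (simp add: real_of_ereal_pos)
  then have "exp (- l * real_of_ereal T) \<le> 1" using assms(1) by simp
  then show ?thesis using False by (simp add: flow_factor_def)
qed

lemma inf_student:
  assumes eig: "kernel_eigdecomp D K lam e I"
    and st: "inf_width_student D lam e I ft T fs"
    and sft: "sq_integrable D ft" and T0: "0 \<le> T"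
  shows "sq_integrable D fs \<and> L2ip D fs fs \<le> L2ip D fs ft"
proof -
  have sfs: "sq_integrable D fs" using st by (simp add: inf_width_student_def)
  have se: "\<And>k. k \<in> I \<Longrightarrow> sq_integrable D (e k)" and lam0: "\<And>k. k \<in> I \<Longrightarrow> 0 \<le> lam k"
    and orth: "\<And>j k. j \<in> I \<Longrightarrow> k \<in> I \<Longrightarrow> L2ip D (e j) (e k) = (if j = k then 1 else 0)"
    using eig by (auto simp: kernel_eigdecomp_def)
  define cf where "cf k = flow_factor (lam k) T" for k
  define \<beta> where "\<beta> k = cf k * L2ip D ft (e k)" for k
  define S where "S F x = (\<Sum>k\<in>F. \<beta> k * e k x)" for F x
  have lim: "((\<lambda>F. pop_risk D fs (S F)) \<longlongrightarrow> 0) (finite_subsets_at_top I)"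
    using st unfolding inf_width_student_def S_def[abs_def] \<beta>_def[abs_def] cf_def[abs_def] by simp
  have key: "L2ip D (S F) (S F) \<le> L2ip D (S F) ft \<and> sq_integrable D (S F)"
    if F: "finite F" "F \<subseteq> I" for F
  proof -
    have seF: "\<And>k. k \<in> F \<Longrightarrow> sq_integrable D (\<lambda>x. \<beta> k * e k x)" using se F by (auto intro: sqi_cmult)
    have sS: "sq_integrable D (S F)" unfolding S_def[abs_def] using F(1) seF by (rule sqi_sum)
    have q: "L2ip D (S F) ft = (\<Sum>k\<in>F. \<beta> k * L2ip D ft (e k))"
      unfolding S_def[abs_def] using F(1) seF sft
      by (simp add: ip_sum ip_cmult ip_comm[of D "e _" ft])
    have inner: "L2ip D (e k) (S F) = \<beta> k" if k: "k \<in> F" for k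
    proof -
      have "L2ip D (e k) (S F) = L2ip D (S F) (e k)" by (rule ip_comm)
      also have "\<dots> = (\<Sum>j\<in>F. \<beta> j * L2ip D (e j) (e k))"
        unfolding S_def[abs_def] using F seF se k by (simp add: ip_sum ip_cmult subset_iff)
      also have "\<dots> = (\<Sum>j\<in>F. if j = k then \<beta> j else 0)"
        using F k by (intro sum.cong) (auto simp: orth subset_iff)
      also have "\<dots> = \<beta> k" using F k by simp
      finally show ?thesis .
    qed
    have p: "L2ip D (S F) (S F) = (\<Sum>k\<in>F. \<beta> k * \<beta> k)"
    proof -
      have "L2ip D (S F) (S F) = (\<Sum>k\<in>F. \<beta> k * L2ip D (e k) (S F))"
        unfolding S_def[abs_def] using F(1) seF sS by (simp add: ip_sum ip_cmult S_def[abs_def])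
      also have "\<dots> = (\<Sum>k\<in>F. \<beta> k * \<beta> k)" using inner by simp
      finally show ?thesis .
    qed
    have "(\<Sum>k\<in>F. \<beta> k * \<beta> k) \<le> (\<Sum>k\<in>F. \<beta> k * L2ip D ft (e k))"
    proof (rule sum_mono)
      fix k assume "k \<in> F"
      then have "0 \<le> cf k" "cf k \<le> 1" using flow_factor_bounds[OF lam0 T0, of k] F by (auto simp: cf_def)
      then have "cf k * cf k * (L2ip D ft (e k))^2 \<le> cf k * (L2ip D ft (e k))^2"
        by (simp add: mult_left_le_one_le mult.assoc)
      then show "\<beta> k * \<beta> k \<le> \<beta> k * L2ip D ft (e k)"
        by (simp add: \<beta>_def power2_eq_square mult_ac)
    qed
    then show ?thesis using p q sS by simp
  qed
  define v where "v x = ft x - 2 * fs x" for x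
  define Kv where "Kv = L2ip D v v"
  have sv: "sq_integrable D v" unfolding v_def[abs_def] using sqi_lin[OF sft sfs, of 1 "-2"] by simp
  have Kv0: "0 \<le> Kv" unfolding Kv_def by (rule ip_nonneg)
  show ?thesis
  proof (rule conjI[OF sfs], rule ccontr)
    assume "\<not> L2ip D fs fs \<le> L2ip D fs ft"
    then have \<delta>: "0 < L2ip D fs fs - L2ip D fs ft" by simp
    define \<delta> where "\<delta> = L2ip D fs fs - L2ip D fs ft"
    define \<epsilon> where "\<epsilon> = \<delta>^2 / (2*(Kv+1))"
    have \<epsilon>0: "0 < \<epsilon>" using \<delta> Kv0 by (simp add: \<epsilon>_def \<delta>_def)
    have "eventually (\<lambda>F. pop_risk D fs (S F) < \<epsilon>) (finite_subsets_at_top I)"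
      using order_tendstoD(2)[OF lim \<epsilon>0] .
    moreover have "eventually (\<lambda>F. finite F \<and> F \<subseteq> I) (finite_subsets_at_top I)" by auto
    ultimately have "eventually (\<lambda>F. pop_risk D fs (S F) < \<epsilon> \<and> finite F \<and> F \<subseteq> I) (finite_subsets_at_top I)"
      by (rule eventually_conj)
    then obtain F where Fr: "pop_risk D fs (S F) < \<epsilon>" and F: "finite F" "F \<subseteq> I"
      using eventually_happens' finite_subsets_at_top_neq_bot by blast
    from key[OF F] have kF: "L2ip D (S F) (S F) \<le> L2ip D (S F) ft" and sS: "sq_integrable D (S F)" by auto
    define ff fg fh gg gh where "ff = L2ip D fs fs" and "fg = L2ip D fs (S F)" and "fh = L2ip D fs ft"
      and "gg = L2ip D (S F) (S F)" and "gh = L2ip D (S F) ft"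
    define d where "d x = fs x - S F x" for x
    have sd: "sq_integrable D d" unfolding d_def[abs_def] using sqi_lin[OF sfs sS, of 1 "-1"] by simp
    have dd: "L2ip D d d = ff - 2*fg + gg"
      unfolding d_def[abs_def] ff_def fg_def gg_def
      using ip3[OF sfs sS sft, of 1 "-1" 0 1 "-1" 0] by simp
    have dv: "L2ip D d v = -2*ff + 2*fg + fh - gh"
      unfolding d_def[abs_def] v_def[abs_def] ff_def fg_def gg_def fh_def gh_def
      using ip3[OF sfs sS sft, of 1 "-1" 0 "-2" 0 1] by (simp add: algebra_simps)
    have Dr: "L2ip D d d < \<epsilon>" using Fr unfolding pop_risk_ip d_def .
    have cs: "(L2ip D d v)^2 \<le> L2ip D d d * Kv" unfolding Kv_def by (rule cauchy_schwarz_ip[OF sd sv])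
    have dd0: "0 \<le> L2ip D d d" by (rule ip_nonneg)
    have "- \<delta> = (gh - gg) + L2ip D d v + L2ip D d d"
      unfolding dd dv \<delta>_def ff_def fh_def by simp
    then have "L2ip D d v \<le> - \<delta>" using kF dd0 by (simp add: gg_def gh_def)
    then have "\<delta>^2 \<le> (L2ip D d v)^2" using \<delta> \<delta>_def
      by (metis abs_le_square_iff abs_minus_cancel abs_of_pos abs_le_D1 neg_le_iff_le minus_le_iff
          abs_ge_minus_self order.trans)
    also have "\<dots> \<le> L2ip D d d * Kv" by (rule cs)
    also have "\<dots> \<le> \<epsilon> * Kv" using Dr Kv0 by (intro mult_right_mono) auto
    also have "\<dots> < \<delta>^2"
    proof -
      have "\<epsilon> * Kv = \<delta>^2 * (Kv / (2*(Kv+1)))" by (simp add: \<epsilon>_def)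
      also have "\<dots> < \<delta>^2 * 1"
        using Kv0 \<delta> by (intro mult_strict_left_mono) (auto simp: \<delta>_def)
      finally show ?thesis by simp
    qed
    finally show False by simp
  qed
qed

lemma sum_upd:
  assumes "i < (m::nat)"
  shows "(\<Sum>j<m. (w(i := c)) j * h j) = (\<Sum>j<m. w j * h j) + (c - w i) * (h i :: real)"
proof -
  have "(\<Sum>j<m. (w(i := c)) j * h j) = (\<Sum>j<m. w j * h j + (if j = i then (c - w i) * h i else 0))"
    by (rule sum.cong) (auto simp: algebra_simps)
  also have "\<dots> = (\<Sum>j<m. w j * h j) + (c - w i) * h i" using assms by (simp add: sum.distrib)
  finally show ?thesis .
qed

lemma deriv_risk:
  fixes \<phi> :: "nat \<Rightarrow> 'a::real_inner \<Rightarrow> real"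
  assumes s\<phi>: "\<forall>i<m. sq_integrable D (\<lambda>x. \<sigma> (inner (u i) x))"
    and sft: "sq_integrable D ft" and i: "i < m"
  shows "deriv (\<lambda>c. pop_risk D (rf_net \<sigma> m (w(i := c)) u) ft) (w i)
    = 2 * (\<Sum>j<m. w j * L2ip D (\<lambda>x. \<sigma> (inner (u j) x)) (\<lambda>x. \<sigma> (inner (u i) x)))
      - 2 * L2ip D (\<lambda>x. \<sigma> (inner (u i) x)) ft"
proof -
  define \<phi> where "\<phi> j = (\<lambda>x. \<sigma> (inner (u j) x))" for j
  define Fw where "Fw x = (\<Sum>j<m. w j * \<phi> j x)" for x
  have s\<phi>': "\<And>j. j < m \<Longrightarrow> sq_integrable D (\<phi> j)" using s\<phi> by (simp add: \<phi>_def)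
  have sF: "sq_integrable D Fw" unfolding Fw_def[abs_def]
    by (rule sqi_sum) (auto intro: sqi_cmult s\<phi>')
  have si: "sq_integrable D (\<phi> i)" using s\<phi>' i .
  define A where "A = L2ip D Fw Fw + L2ip D ft ft - 2 * L2ip D Fw ft"
  define B where "B = L2ip D (\<phi> i) (\<phi> i)"
  define C where "C = 2 * L2ip D Fw (\<phi> i) - 2 * L2ip D (\<phi> i) ft"
  have eqf: "(\<lambda>c. pop_risk D (rf_net \<sigma> m (w(i := c)) u) ft) = (\<lambda>c. A + (c - w i)^2 * B + (c - w i) * C)"
  proof
    fix c
    have r: "rf_net \<sigma> m (w(i := c)) u x = Fw x + (c - w i) * \<phi> i x" for x
      unfolding rf_net_def Fw_def \<phi>_def by (rule sum_upd[OF i])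
    have "(\<lambda>x. rf_net \<sigma> m (w(i := c)) u x - ft x) = (\<lambda>x. 1 * Fw x + (c - w i) * \<phi> i x + (-1) * ft x)"
      by (rule ext) (simp add: r)
    then have "pop_risk D (rf_net \<sigma> m (w(i := c)) u) ft
       = L2ip D (\<lambda>x. 1 * Fw x + (c - w i) * \<phi> i x + (-1) * ft x) (\<lambda>x. 1 * Fw x + (c - w i) * \<phi> i x + (-1) * ft x)"
      by (simp only: pop_risk_ip)
    also have "\<dots> = A + (c - w i)^2 * B + (c - w i) * C"
      unfolding ip3[OF sF si sft] A_def B_def C_def by (simp add: power2_eq_square algebra_simps)
    finally show "pop_risk D (rf_net \<sigma> m (w(i := c)) u) ft = A + (c - w i)^2 * B + (c - w i) * C" .
  qed
  have "((\<lambda>c. A + (c - w i)^2 * B + (c - w i) * C) has_real_derivative C) (at (w i))"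
    by (auto intro!: derivative_eq_intros)
  then have "deriv (\<lambda>c. pop_risk D (rf_net \<sigma> m (w(i := c)) u) ft) (w i) = C"
    unfolding eqf by (rule DERIV_imp_deriv)
  moreover have "L2ip D Fw (\<phi> i) = (\<Sum>j<m. w j * L2ip D (\<phi> j) (\<phi> i))"
    unfolding Fw_def[abs_def] by (subst ip_sum) (use s\<phi>' si in \<open>auto simp: ip_cmult intro: sqi_cmult\<close>)
  ultimately show ?thesis by (simp add: C_def \<phi>_def)
qed

lemma fin_student:
  fixes u :: "nat \<Rightarrow> 'a::real_inner"
  assumes s\<phi>: "\<forall>i<m. sq_integrable D (\<lambda>x. \<sigma> (inner (u i) x))"
    and gf: "grad_flow_student D \<sigma> m u ft T fs"
    and sft: "sq_integrable D ft" and T0: "0 \<le> T"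
  shows "sq_integrable D fs \<and> L2ip D fs fs \<le> L2ip D fs ft"
proof -
  define \<phi> where "\<phi> j = (\<lambda>x. \<sigma> (inner (u j) x))" for j
  have s\<phi>': "\<And>j. j < m \<Longrightarrow> sq_integrable D (\<phi> j)" using s\<phi> by (simp add: \<phi>_def)
  define G where "G i j = L2ip D (\<phi> i) (\<phi> j)" for i j
  define b where "b i = L2ip D (\<phi> i) ft" for i
  have symG: "\<And>i j. G i j = G j i" unfolding G_def by (rule ip_comm)
  define S where "S = {\<tau>::real. 0 \<le> \<tau> \<and> ereal \<tau> \<le> T}"
  define Q where "Q w = (\<Sum>i<m. w i * (b i - (\<Sum>j<m. G i j * w j)))" for w :: "nat \<Rightarrow> real"
  obtain ws wT where w0: "\<forall>i<m. ws 0 i = 0"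
    and der0: "\<forall>t. 0 \<le> t \<and> ereal t \<le> T \<longrightarrow>
           (\<forall>i<m. ((\<lambda>\<tau>. ws \<tau> i) has_real_derivative
                     (- (1 / real m) * deriv (\<lambda>c. pop_risk D (rf_net \<sigma> m ((ws t)(i := c)) u) ft) (ws t i)))
                   (at t within {\<tau>. 0 \<le> \<tau> \<and> ereal \<tau> \<le> T}))"
    and fin: "T \<noteq> \<infinity> \<longrightarrow> (\<forall>i<m. wT i = ws (real_of_ereal T) i)"
    and inf: "T = \<infinity> \<longrightarrow> (\<forall>i<m. ((\<lambda>t. ws t i) \<longlongrightarrow> wT i) at_top)"
    and fsd: "fs = rf_net \<sigma> m wT u"
    using gf unfolding grad_flow_student_def by blast
  have der: "((\<lambda>\<tau>. ws \<tau> i) has_real_derivative (2 / real m) * (b i - (\<Sum>j<m. G i j * ws t j))) (at t within S)"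
    if "t \<in> S" "i < m" for t i
  proof -
    have "((\<lambda>\<tau>. ws \<tau> i) has_real_derivative
          (- (1 / real m) * deriv (\<lambda>c. pop_risk D (rf_net \<sigma> m ((ws t)(i := c)) u) ft) (ws t i))) (at t within S)"
      using der0 that by (simp add: S_def)
    moreover have "deriv (\<lambda>c. pop_risk D (rf_net \<sigma> m ((ws t)(i := c)) u) ft) (ws t i)
       = 2 * (\<Sum>j<m. ws t j * G j i) - 2 * b i"
      using deriv_risk[OF s\<phi> sft \<open>i < m\<close>, of "ws t"] by (simp add: G_def b_def \<phi>_def)
    moreover have "(\<Sum>j<m. ws t j * G j i) = (\<Sum>j<m. G i j * ws t j)"
      by (simp add: symG mult.commute)
    ultimately show ?thesis by (simp add: algebra_simps)
  qed
  have Qpos: "0 \<le> Q (ws t)" if "t \<in> S" for t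
    unfolding Q_def
  proof (rule flow_pos[where G=G and b=b and w=ws and S=S and c="2 / real m"])
    show "\<And>i j. G i j = G j i" by (rule symG)
    show "\<And>i. i < m \<Longrightarrow> ws 0 i = 0" using w0 by simp
    show "\<And>x. x \<in> S \<Longrightarrow> 0 \<le> x \<and> {0..x} \<subseteq> S"
      by (auto simp: S_def intro: order_trans[of _ "ereal _"])
    show "\<And>t i. t \<in> S \<Longrightarrow> i < m \<Longrightarrow> ((\<lambda>\<tau>. ws \<tau> i) has_real_derivative 2 / real m * (b i - (\<Sum>j<m. G i j * ws t j))) (at t within S)"
      by (rule der)
    show "0 \<le> 2 / real m" by simp
    show "t \<in> S" by (rule that)
  qed
  have QwT: "0 \<le> Q wT"
  proof (cases "T = \<infinity>")
    case False
    define t0 where "t0 = real_of_ereal T"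
    have "T = ereal t0" using False T0 by (cases T) (auto simp: t0_def)
    then have "t0 \<in> S" using T0 by (simp add: S_def)
    moreover have "Q wT = Q (ws t0)" unfolding Q_def using fin False by (simp add: t0_def)
    ultimately show ?thesis using Qpos by simp
  next
    case True
    then have S: "S = {\<tau>. 0 \<le> \<tau>}" by (simp add: S_def)
    have "((\<lambda>t. Q (ws t)) \<longlongrightarrow> Q wT) at_top"
      unfolding Q_def using inf True by (auto intro!: tendsto_intros)
    moreover have "eventually (\<lambda>t. 0 \<le> Q (ws t)) at_top"
      using eventually_ge_at_top[of "0::real"] by eventually_elim (auto intro: Qpos simp: S)
    ultimately show ?thesis by (rule tendsto_lowerbound) simp
  qed
  have fse: "fs = (\<lambda>x. \<Sum>i<m. wT i * \<phi> i x)" by (simp add: fsd rf_net_def[abs_def] \<phi>_def)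
  have sT: "\<And>i. i \<in> {..<m} \<Longrightarrow> sq_integrable D (\<lambda>x. wT i * \<phi> i x)" using s\<phi>' by (auto intro: sqi_cmult)
  have sfs: "sq_integrable D fs" unfolding fse by (rule sqi_sum) (use sT in auto)
  have q: "L2ip D fs ft = (\<Sum>i<m. wT i * b i)"
    unfolding fse by (subst ip_sum) (use sT sft in \<open>auto simp: ip_cmult b_def\<close>)
  have inner: "L2ip D (\<phi> i) fs = (\<Sum>j<m. G i j * wT j)" if "i < m" for i
  proof -
    have "L2ip D (\<phi> i) fs = L2ip D fs (\<phi> i)" by (rule ip_comm)
    also have "\<dots> = (\<Sum>j<m. wT j * G j i)" unfolding fse
      by (subst ip_sum) (use sT s\<phi>' that in \<open>auto simp: ip_cmult G_def\<close>)
    also have "\<dots> = (\<Sum>j<m. G i j * wT j)" by (simp add: symG mult.commute)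
    finally show ?thesis .
  qed
  have p: "L2ip D fs fs = (\<Sum>i<m. wT i * (\<Sum>j<m. G i j * wT j))"
  proof -
    have "L2ip D fs fs = (\<Sum>i<m. wT i * L2ip D (\<phi> i) fs)"
      by (subst (1) fse, subst ip_sum) (use sT sfs in \<open>auto simp: ip_cmult\<close>)
    also have "\<dots> = (\<Sum>i<m. wT i * (\<Sum>j<m. G i j * wT j))" using inner by simp
    finally show ?thesis .
  qed
  have "Q wT = L2ip D fs ft - L2ip D fs fs"
    unfolding Q_def p q by (simp add: algebra_simps sum_subtractf)
  then show ?thesis using QwT sfs by simp
qed

theorem corollary4p4:
  fixes D U :: "'a::euclidean_space measure"
    and \<sigma> :: "real \<Rightarrow> real"
    and fstar fs :: "'a \<Rightarrow> real"
    and Mt Ms :: nat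
    and ut us :: "nat \<Rightarrow> 'a"
    and wt :: "nat \<Rightarrow> real"
    and T :: ereal
  assumes "prob_space D" and "sets D = sets borel"
    and "prob_space U" and "sets U = sets borel"
    and "sq_integrable D fstar" and "(\<integral>x. (fstar x)^2 \<partial>D) = 1"
    and "\<forall>i<Mt. sq_integrable D (\<lambda>x. \<sigma> (inner (ut i) x))"
    and "is_teacher D \<sigma> Mt ut fstar wt"
    and "0 \<le> T"
    and "((\<forall>i<Ms. sq_integrable D (\<lambda>x. \<sigma> (inner (us i) x))) \<and>
          grad_flow_student D \<sigma> Ms us (rf_net \<sigma> Mt wt ut) T fs)
         \<or> (\<exists>lam e I. kernel_eigdecomp D (rf_kernel U \<sigma>) lam e I \<and>
                      inf_width_student D lam e I (rf_net \<sigma> Mt wt ut) T fs)"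
  shows "pop_risk D fs fstar \<ge>
           (sqrt (1 + 3 * pop_risk D (rf_net \<sigma> Mt wt ut) fstar)
            - sqrt (1 - pop_risk D (rf_net \<sigma> Mt wt ut) fstar))^2 / 4
       \<and> (sqrt (1 + 3 * pop_risk D (rf_net \<sigma> Mt wt ut) fstar)
            - sqrt (1 - pop_risk D (rf_net \<sigma> Mt wt ut) fstar))^2 / 4
           \<ge> 3 / 4 * (pop_risk D (rf_net \<sigma> Mt wt ut) fstar)^2"
proof -
  note sfstar = assms(5)
  define ft where "ft = rf_net \<sigma> Mt wt ut"
  have sft: "sq_integrable D ft"
    unfolding ft_def rf_net_def[abs_def]
    by (rule sqi_sum) (use assms(7) in \<open>auto intro: sqi_cmult\<close>)
  have hh: "L2ip D fstar fstar = 1" using assms(6) by (simp add: L2ip_def power2_eq_square)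
  have stud: "sq_integrable D fs \<and> L2ip D fs fs \<le> L2ip D fs ft"
    using assms(10)
  proof
    assume "(\<forall>i<Ms. sq_integrable D (\<lambda>x. \<sigma> (inner (us i) x))) \<and> grad_flow_student D \<sigma> Ms us (rf_net \<sigma> Mt wt ut) T fs"
    then show ?thesis using fin_student[OF _ _ sft assms(9)] unfolding ft_def by blast
  next
    assume "\<exists>lam e I. kernel_eigdecomp D (rf_kernel U \<sigma>) lam e I \<and> inf_width_student D lam e I (rf_net \<sigma> Mt wt ut) T fs"
    then show ?thesis using inf_student[OF _ _ sft assms(9)] unfolding ft_def by blast
  qed
  then have sfs: "sq_integrable D fs" and pq: "L2ip D fs fs \<le> L2ip D fs ft" by auto
  define L where "L = pop_risk D ft fstar"
  define a where "a = L2ip D ft ft"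
  define cr where "cr = L2ip D ft fstar"
  have Lexp: "L = a - 2*cr + 1"
    unfolding L_def pop_risk_ip a_def cr_def
    using ip3[OF sft sfstar sfstar, of 1 "-1" 0 1 "-1" 0] hh by simp
  have L0: "0 \<le> L" unfolding L_def pop_risk_ip by (rule ip_nonneg)
  have teach: "\<And>w'. L \<le> pop_risk D (rf_net \<sigma> Mt w' ut) fstar"
    using assms(8) by (simp add: is_teacher_def L_def ft_def)
  have L1: "L \<le> 1"
  proof -
    have "rf_net \<sigma> Mt (\<lambda>_. 0) ut = (\<lambda>x. 0)" by (simp add: rf_net_def[abs_def])
    then have "pop_risk D (rf_net \<sigma> Mt (\<lambda>_. 0) ut) fstar = 1"
      using assms(6) by (simp add: pop_risk_def)
    then show ?thesis using teach[of "\<lambda>_. 0"] by simp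
  qed
  have oa: "cr = a"
  proof -
    have "(a - cr)^2 \<le> 0 * a"
    proof (rule disc_real)
      fix t :: real
      have r: "rf_net \<sigma> Mt (\<lambda>i. (1 - t) * wt i) ut x = (1 - t) * ft x" for x
        by (simp add: rf_net_def ft_def sum_distrib_left mult.assoc)
      have e: "(\<lambda>x. rf_net \<sigma> Mt (\<lambda>i. (1 - t) * wt i) ut x - fstar x)
          = (\<lambda>x. (1 - t) * ft x + (-1) * fstar x + 0 * fstar x)"
        by (simp add: r)
      have "pop_risk D (rf_net \<sigma> Mt (\<lambda>i. (1 - t) * wt i) ut) fstar = (1-t)^2 * a - 2*(1-t)*cr + 1"
        unfolding pop_risk_ip e ip3[OF sft sfstar sfstar] a_def cr_def hh
        by (simp add: power2_eq_square algebra_simps)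
      moreover have "L \<le> pop_risk D (rf_net \<sigma> Mt (\<lambda>i. (1 - t) * wt i) ut) fstar" by (rule teach)
      ultimately have "L \<le> (1-t)^2 * a - 2*(1-t)*cr + 1" by simp
      then show "0 \<le> 0 - 2*t*(a - cr) + t^2 * a" using Lexp by (simp add: power2_eq_square algebra_simps)
    qed (simp add: a_def ip_nonneg)
    then show ?thesis by simp
  qed
  define p q h where "p = L2ip D fs fs" and "q = L2ip D fs ft" and "h = L2ip D fs fstar"
  define X where "X = (\<lambda>x. 1*fs x + (-1/2)*ft x + 0*fstar x)"
  define Y where "Y = (\<lambda>x. 0*fs x + (-1/2)*ft x + 1*fstar x)"
  have sX: "sq_integrable D X" unfolding X_def by (rule sqi3[OF sfs sft sfstar])
  have sY: "sq_integrable D Y" unfolding Y_def by (rule sqi3[OF sfs sft sfstar])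
  have XX: "L2ip D X X = p + a/4 - q"
    unfolding X_def ip3[OF sfs sft sfstar] p_def q_def a_def by simp
  have YY: "L2ip D Y Y = a/4 + 1 - a"
    unfolding Y_def ip3[OF sfs sft sfstar] hh using oa by (simp add: cr_def a_def)
  have XY: "L2ip D X Y = a/4 - q/2 + h - a/2"
    unfolding X_def Y_def ip3[OF sfs sft sfstar] p_def q_def h_def using oa by (simp add: cr_def a_def)
  have cs: "(a/4 - q/2 + h - a/2)^2 \<le> (p + a/4 - q) * (a/4 + 1 - a)"
    using cauchy_schwarz_ip[OF sX sY] unfolding XX YY XY .
  have xx0: "0 \<le> p + a/4 - q" using ip_nonneg[of D X] unfolding XX .
  have e2: "(\<lambda>x. fs x - fstar x) = (\<lambda>x. 1*fs x + 0*ft x + (-1)*fstar x)" by simp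
  have LST: "pop_risk D fs fstar = p - 2*h + 1"
    unfolding pop_risk_ip e2 ip3[OF sfs sft sfstar] hh p_def h_def by simp
  have a0: "0 \<le> a" unfolding a_def by (rule ip_nonneg)
  have La: "L = 1 - a" using Lexp oa by simp
  have pq': "p \<le> q" using pq by (simp add: p_def q_def)
  have a1: "a \<le> 1" using L0 La by simp
  have "(sqrt (1 + 3*(1-a)) - sqrt (1-(1-a)))^2/4 \<le> p - 2*h + 1"
    by (rule real_final[OF pq' a0 a1 xx0 cs])
  then have first: "(sqrt (1 + 3*L) - sqrt (1-L))^2/4 \<le> pop_risk D fs fstar"
    using La LST by simp
  have second: "3/4*L^2 \<le> (sqrt (1+3*L) - sqrt (1-L))^2/4" by (rule real_second[OF L0 L1])
  show ?thesis using first second by (simp add: L_def ft_def)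
qed

end
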